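(* Let $\gamma_1$ be the type-1 greedy submodularity ratio of $f_{Pa}$ with respect to a run of Algorithm 2 (defined in the context). Then $$\gamma_1\ge\min_{j\in\{0,\dots,|\mathcal{Y}_2|\}}\frac{\lambda_2(F_p+H(\mathcal{Y}_2^j))\,\lambda_2(F_p+H(\{z_j\}\cup\mathcal{Y}_2^j))}{\lambda_1(F_p+H(\mathcal{Y}_2^j))\,\lambda_1(F_p+H(\{z_j\}\cup\mathcal{Y}_2^j))},$$ where, for each $j$, $z_j\in\arg\min_{y\in\bar{\mathcal{M}}\setminus\mathcal{Y}_2^j}\frac{\lambda_2(F_p+H(\{y\}\cup\mathcal{Y}_2^j))}{\lambda_1(F_p+H(\{y\}\cup\mathcal{Y}_2^j))}$.
   Context: For a symmetric positive semidefinite $2\times2$ matrix $P$, $\lambda_1(P)\ge\lambda_2(P)$ are its eigenvalues. Setting: networked SIR model on directed graph $\mathcal{G}=(\mathcal{V},\mathcal{E})$, $\mathcal{V}=[n]$, $\bar{\mathcal{N}}_i=\{j:(j,i)\in\mathcal{E}\}\cup\{i\}$, weights $a_{ij}\ge0$, sampling parameter $h$, dynamics $s_i[k+1]=s_i[k]-hs_i[k]\beta\sum_{j\in\bar{\mathcal{N}}_i}a_{ij}x_j[k]$, $x_i[k+1]=(1-h\delta)x_i[k]+hs_i[k]\beta\sum_{j\in\bar{\mathcal{N}}_i}a_{ij}x_j[k]$, $r_i[k+1]=r_i[k]+h\delta x_i[k]$, known initial condition, $\theta=[\beta\ \delta]^T$ with prior pdf $p(\theta)$; $x_i[k],r_i[k]\in[0,1)$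 viewed as functions of $\theta$. Given integers $1\le t_1\le t_2$, integers $N_i^x,N_i^r,\zeta_i,\eta_i\ge1$, costs $c_{k,i},b_{k,i}>0$, budget $B\ge0$. Ground set $\bar{\mathcal{M}}=\{(\hat x_i[k],l):i\in\mathcal{V},k\in\{t_1,\dots,t_2\},l\in[\zeta_i]\}\cup\{(\hat r_i[k],l):i\in\mathcal{V},k\in\{t_1,\dots,t_2\},l\in[\eta_i]\}$ with $c((\hat x_i[k],l))=c_{k,i}$, $c((\hat r_i[k],l))=b_{k,i}$, $c(\mathcal{Y})=\sum_{y\in\mathcal{Y}}c(y)$. $H_y=\mathbb{E}_\theta\big[\frac{N_i^x}{x_i[k](1-x_i[k])}\frac{\partial x_i[k]}{\partial\theta}(\frac{\partial x_i[k]}{\partial\theta})^T\big]$ for $y=(\hat x_i[k],l)$, analogously with $r$, $N_i^r$ for $y=(\hat r_i[k],l)$ (integrand $0$ where the state is $0$), $\mathbb{E}_\theta$ w.r.t. $p(\theta)$; $H_y\succeq0$; $H(\mathcal{Y})=\sum_{y\in\mathcal{Y}}H_y$. $F_p=\mathbb{E}_\theta[\nabla_\theta\ln p(\theta)\nabla_\theta\ln p(\theta)^T]\succ0$. $f_{Pa}(\mathcal{Y})=\mathrm{Tr}(F_p^{-1})-\mathrm{Tr}((F_p+H(\mathcal{Y}))^{-1})$. $\hat f_{Pa}$ is a set function approximating $f_{Pa}$ with $\hat f_{Pa}(\emptyset)=0$. Algorithm 2: (1) $\mathcal{Y}_1=\{y\}$ with $y\in\arg\max_{y\in\bar{\mathcal{M}}}\hat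 f_{Pa}(\{y\})$; (2) $\mathcal{Y}_2=\emptyset$, $\mathcal{C}=\bar{\mathcal{M}}$; (3) while $\mathcal{C}\ne\emptyset$: choose $y^\star\in\arg\max_{y\in\mathcal{C}}\frac{\hat f_{Pa}(\{y\}\cup\mathcal{Y}_2)-\hat f_{Pa}(\mathcal{Y}_2)}{c(y)}$; if $c(y^\star)+c(\mathcal{Y}_2)\le B$ add $y^\star$ to $\mathcal{Y}_2$; remove $y^\star$ from $\mathcal{C}$; (4) output the better of $\mathcal{Y}_1,\mathcal{Y}_2$ under $\hat f_{Pa}$. $\mathcal{Y}_2^j$ denotes the set of the first $j$ elements added to $\mathcal{Y}_2$ ($\mathcal{Y}_2^0=\emptyset$), $\mathcal{Y}_2$ the final set. The type-1 greedy submodularity ratio $\gamma_1$ is the largest real with $\sum_{y\in\mathcal{A}\setminus\mathcal{Y}_2^j}(f_{Pa}(\{y\}\cup\mathcal{Y}_2^j)-f_{Pa}(\mathcal{Y}_2^j))\ge\gamma_1(f_{Pa}(\mathcal{A}\cup\mathcal{Y}_2^j)-f_{Pa}(\mathcal{Y}_2^j))$ for all $\mathcal{A}\subseteq\bar{\mathcal{M}}$ and all $j\in\{0,\dots,|\mathcal{Y}_2|\}$. *)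

theory Defs
  imports "HOL-Analysis.Analysis"
begin

type_synonym mat2 = "real^2^2"

definition psd2 :: "mat2 \<Rightarrow> bool" where
  "psd2 P \<longleftrightarrow> transpose P = P \<and> (\<forall>v::real^2. 0 \<le> v \<bullet> (P *v v))"

definition pd2 :: "mat2 \<Rightarrow> bool" where
  "pd2 P \<longleftrightarrow> transpose P = P \<and> (\<forall>v::real^2. v \<noteq> 0 \<longrightarrow> 0 < v \<bullet> (P *v v))"

definition eigvals2 :: "mat2 \<Rightarrow> real set" where
  "eigvals2 P = {l. \<exists>v::real^2. v \<noteq> 0 \<and> P *v v = l *\<^sub>R v}"

definition lam1 :: "mat2 \<Rightarrow> real" where "lam1 P = Max (eigvals2 P)"
definition lam2 :: "mat2 \<Rightarrow> real" where "lam2 P = Min (eigvals2 P)"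

definition Hset :: "('a \<Rightarrow> mat2) \<Rightarrow> 'a set \<Rightarrow> mat2" where
  "Hset H Y = (\<Sum>y\<in>Y. H y)"

definition fPa :: "mat2 \<Rightarrow> ('a \<Rightarrow> mat2) \<Rightarrow> 'a set \<Rightarrow> real" where
  "fPa Fp H Y = trace (matrix_inv Fp) - trace (matrix_inv (Fp + Hset H Y))"

text \<open>Accepted elements (in order of addition to Y_2) when the candidates ys are
  processed in order by step (3) of Algorithm 2 with costs c and budget B.\<close>
definition greedy_acc :: "('a \<Rightarrow> real) \<Rightarrow> real \<Rightarrow> 'a list \<Rightarrow> 'a list" where
  "greedy_acc c B ys =
     foldl (\<lambda>S y. if c y + sum c (set S) \<le> B then S @ [y] else S) [] ys"

text \<open>ps is a valid processing order of step (3) of Algorithm 2 on ground set M: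
  it enumerates M (each element of C is removed exactly once), and at each step the
  chosen element maximises the cost-normalised marginal gain of fhat over the remaining
  candidates, relative to the current Y_2.\<close>
definition alg2_run :: "('a set \<Rightarrow> real) \<Rightarrow> ('a \<Rightarrow> real) \<Rightarrow> real \<Rightarrow> 'a set \<Rightarrow> 'a list \<Rightarrow> bool" where
  "alg2_run fh c B M ps \<longleftrightarrow> distinct ps \<and> set ps = M \<and>
     (\<forall>i < length ps. \<forall>y \<in> set (drop i ps).
        let S = set (greedy_acc c B (take i ps)) in
        (fh (insert y S) - fh S) / c y \<le> (fh (insert (ps ! i) S) - fh S) / c (ps ! i))"

definition Y2j :: "('a \<Rightarrow> real) \<Rightarrow> real \<Rightarrow> 'a list \<Rightarrow> nat \<Rightarrow> 'a set" where
  "Y2j c B ps j = set (take j (greedy_acc c B ps))"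

text \<open>gamma satisfies the defining inequality of the type-1 greedy submodularity ratio
  of f with respect to the sets Y 0, ..., Y n (n = |Y_2|).\<close>
definition gsr1_ok :: "('a set \<Rightarrow> real) \<Rightarrow> 'a set \<Rightarrow> (nat \<Rightarrow> 'a set) \<Rightarrow> nat \<Rightarrow> real \<Rightarrow> bool" where
  "gsr1_ok f M Y n g \<longleftrightarrow>
     (\<forall>A. A \<subseteq> M \<longrightarrow> (\<forall>j \<le> n.
        (\<Sum>y\<in>A - Y j. f (insert y (Y j)) - f (Y j)) \<ge> g * (f (A \<union> Y j) - f (Y j))))"

end

theory Submission
  imports Defs
begin
lemma mat2_eq: "(A::real^2^2) = B \<longleftrightarrow> A$1$1 = B$1$1 \<and> A$1$2 = B$1$2 \<and> A$2$1 = B$2$1 \<and> A$2$2 = B$2$2"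
  by (auto simp add: vec_eq_iff forall_2)
lemma mult_ent: "((A::real^2^2) ** B)$i$j = A$i$1*B$1$j + A$i$2*B$2$j"
  by (simp add: matrix_matrix_mult_def sum_2)
lemma mv_ent: "((A::real^2^2) *v x)$i = A$i$1*x$1 + A$i$2*x$2"
  by (simp add: matrix_vector_mult_def sum_2)
lemma inner2: "(x::real^2) \<bullet> w = x$1*w$1 + x$2*w$2"
  by (simp add: inner_vec_def sum_2)
lemma trace2: "trace (A::real^2^2) = A$1$1 + A$2$2"
  by (simp add: trace_def sum_2)
lemma mat_ent: "(mat k :: real^2^2)$i$j = (if i = j then k else 0)"
  by (simp add: mat_def)
lemma tr_ent: "(transpose (A::real^2^2))$i$j = A$j$i"
  by (simp add: transpose_def)
lemma sym_iff: "transpose (A::real^2^2) = A \<longleftrightarrow> A$1$2 = A$2$1"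
  by (auto simp add: mat2_eq tr_ent)

lemma qf: "(x::real^2) \<bullet> ((A::real^2^2) *v x) = A$1$1*x$1^2 + (A$1$2 + A$2$1)*x$1*x$2 + A$2$2*x$2^2"
  by (simp add: inner2 mv_ent power2_eq_square algebra_simps)

lemma quad_nonneg:
  fixes a b d x y :: real
  assumes "0 \<le> a" "0 \<le> d" "b^2 \<le> a*d"
  shows "0 \<le> a*x^2 + 2*b*x*y + d*y^2"
proof (cases "a > 0")
  case True
  have "a*(a*x^2 + 2*b*x*y + d*y^2) = (a*x+b*y)^2 + (a*d-b^2)*y^2"
    by (simp add: power2_eq_square algebra_simps)
  also have "\<dots> \<ge> 0" using assms by simp
  finally show ?thesis using True by (simp add: zero_le_mult_iff)
next
  case False
  then have "a = 0" using assms by simp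
  then have "b = 0" using assms by simp
  then show ?thesis using \<open>a = 0\<close> assms by simp
qed

lemma psd2_iff: "psd2 A \<longleftrightarrow> A$1$2 = A$2$1 \<and> 0 \<le> A$1$1 \<and> 0 \<le> A$2$2 \<and> A$1$2^2 \<le> A$1$1*A$2$2"
proof
  assume h: "psd2 A"
  then have sy: "A$1$2 = A$2$1" by (simp add: psd2_def sym_iff)
  have q: "\<And>x1 x2. 0 \<le> A$1$1*x1^2 + 2*A$1$2*x1*x2 + A$2$2*x2^2"
  proof -
    fix x1 x2 :: real
    have "0 \<le> (vector[x1,x2]::real^2) \<bullet> (A *v vector[x1,x2])" using h by (simp add: psd2_def)
    then show "0 \<le> A$1$1*x1^2 + 2*A$1$2*x1*x2 + A$2$2*x2^2" using sy by (simp add: qf)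
  qed
  have a: "0 \<le> A$1$1" using q[of 1 0] by simp
  have d: "0 \<le> A$2$2" using q[of 0 1] by simp
  have det: "A$1$2^2 \<le> A$1$1*A$2$2"
  proof (cases "A$1$1 > 0")
    case True
    have "0 \<le> A$1$1*(A$1$2)^2 + 2*A$1$2*(A$1$2)*(-A$1$1) + A$2$2*(-A$1$1)^2"
      using q[of "A$1$2" "-A$1$1"] by simp
    also have "\<dots> = A$1$1*(A$1$1*A$2$2 - A$1$2^2)" by (simp add: power2_eq_square algebra_simps)
    finally show ?thesis using True by (simp add: zero_le_mult_iff)
  next
    case False
    then have a0: "A$1$1 = 0" using a by simp
    have "A$1$2 = 0"
    proof (rule ccontr)
      assume nz: "A$1$2 \<noteq> 0"
      have "0 \<le> A$1$1*(-(A$2$2+1)/(2*A$1$2))^2 + 2*A$1$2*(-(A$2$2+1)/(2*A$1$2))*1 + A$2$2*1^2"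
        using q by blast
      also have "\<dots> = -1" using a0 nz by (simp add: field_simps)
      finally show False by simp
    qed
    then show ?thesis using a0 by simp
  qed
  show "A$1$2 = A$2$1 \<and> 0 \<le> A$1$1 \<and> 0 \<le> A$2$2 \<and> A$1$2^2 \<le> A$1$1*A$2$2"
    using sy a d det by simp
next
  assume h: "A$1$2 = A$2$1 \<and> 0 \<le> A$1$1 \<and> 0 \<le> A$2$2 \<and> A$1$2^2 \<le> A$1$1*A$2$2"
  have "transpose A = A" using h by (simp add: sym_iff)
  moreover have "\<forall>x::real^2. 0 \<le> x \<bullet> (A *v x)"
  proof
    fix x :: "real^2"
    have "0 \<le> A$1$1*x$1^2 + 2*A$1$2*x$1*x$2 + A$2$2*x$2^2"
      using h quad_nonneg by blast
    then show "0 \<le> x \<bullet> (A *v x)" using h by (simp add: qf)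
  qed
  ultimately show "psd2 A" by (simp add: psd2_def)
qed

lemma pd2_ent:
  assumes "pd2 A"
  shows "A$1$2 = A$2$1 \<and> 0 < A$1$1 \<and> 0 < A$2$2 \<and> A$1$2^2 < A$1$1*A$2$2"
proof -
  have sy: "A$1$2 = A$2$1" using assms by (simp add: pd2_def sym_iff)
  have q: "\<And>x1 x2. (x1 \<noteq> 0 \<or> x2 \<noteq> 0) \<Longrightarrow> 0 < A$1$1*x1^2 + 2*A$1$2*x1*x2 + A$2$2*x2^2"
  proof -
    fix x1 x2 :: real
    assume nz: "x1 \<noteq> 0 \<or> x2 \<noteq> 0"
    have "(vector[x1,x2]::real^2) \<noteq> 0" using nz by (auto simp: vec_eq_iff forall_2)
    then have "0 < (vector[x1,x2]::real^2) \<bullet> (A *v vector[x1,x2])" using assms by (simp add: pd2_def)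
    then show "0 < A$1$1*x1^2 + 2*A$1$2*x1*x2 + A$2$2*x2^2" using sy by (simp add: qf)
  qed
  have a: "0 < A$1$1" using q[of 1 0] by simp
  have d: "0 < A$2$2" using q[of 0 1] by simp
  have "0 < A$1$1*(A$1$2)^2 + 2*A$1$2*(A$1$2)*(-A$1$1) + A$2$2*(-A$1$1)^2"
    using q[of "A$1$2" "-A$1$1"] a by simp
  also have "\<dots> = A$1$1*(A$1$1*A$2$2 - A$1$2^2)" by (simp add: power2_eq_square algebra_simps)
  finally have "A$1$2^2 < A$1$1*A$2$2" using a by (simp add: zero_less_mult_iff)
  then show ?thesis using sy a d by simp
qed

definition sq2 :: "mat2 \<Rightarrow> real" where
  "sq2 A = sqrt ((A$1$1 - A$2$2)^2 + 4*(A$1$2)^2)"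

lemma sq2_nonneg: "0 \<le> sq2 A" by (simp add: sq2_def)
lemma sq2_sq: "(sq2 A)^2 = (A$1$1 - A$2$2)^2 + 4*(A$1$2)^2" by (simp add: sq2_def)
lemma sq2_ge: "\<bar>A$1$1 - A$2$2\<bar> \<le> sq2 A"
proof -
  have "sqrt ((A$1$1 - A$2$2)^2) \<le> sq2 A" unfolding sq2_def by (rule real_sqrt_le_mono) simp
  then show ?thesis by simp
qed

lemma char_factor:
  "(A$1$1 - l)*(A$2$2 - l) - (A$1$2)^2 = (l - (A$1$1+A$2$2 - sq2 A)/2) * (l - (A$1$1+A$2$2 + sq2 A)/2)"
proof -
  have "(l - (A$1$1+A$2$2 - sq2 A)/2) * (l - (A$1$1+A$2$2 + sq2 A)/2)
     = l^2 - (A$1$1+A$2$2)*l + ((A$1$1+A$2$2)^2 - (sq2 A)^2)/4"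
    by (simp add: power2_eq_square field_simps)
  also have "\<dots> = l^2 - (A$1$1+A$2$2)*l + ((A$1$1+A$2$2)^2 - ((A$1$1 - A$2$2)^2 + 4*(A$1$2)^2))/4"
    by (simp only: sq2_sq)
  also have "\<dots> = (A$1$1 - l)*(A$2$2 - l) - (A$1$2)^2"
    by (simp add: power2_eq_square field_simps)
  finally show ?thesis by simp
qed

lemma eig_char:
  assumes sy: "A$1$2 = A$2$1"
  shows "l \<in> eigvals2 A \<longleftrightarrow> (A$1$1 - l)*(A$2$2 - l) = (A$1$2)^2"
proof
  assume "l \<in> eigvals2 A"
  then obtain x :: "real^2" where nz: "x \<noteq> 0" and ev: "A *v x = l *\<^sub>R x" by (auto simp: eigvals2_def)
  have e1: "(A$1$1 - l)*x$1 + A$1$2*x$2 = 0" using ev[THEN arg_cong[where f="\<lambda>v. v$1"]]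
    by (simp add: mv_ent algebra_simps)
  have e2: "A$1$2*x$1 + (A$2$2 - l)*x$2 = 0" using ev[THEN arg_cong[where f="\<lambda>v. v$2"]] sy
    by (simp add: mv_ent algebra_simps)
  have f1: "((A$1$1 - l)*(A$2$2 - l) - (A$1$2)^2) * x$1 = 0"
  proof -
    have "((A$1$1 - l)*(A$2$2 - l) - (A$1$2)^2) * x$1
       = (A$2$2 - l)*((A$1$1 - l)*x$1 + A$1$2*x$2) - A$1$2*(A$1$2*x$1 + (A$2$2 - l)*x$2)"
      by (simp add: power2_eq_square algebra_simps)
    then show ?thesis using e1 e2 by simp
  qed
  have f2: "((A$1$1 - l)*(A$2$2 - l) - (A$1$2)^2) * x$2 = 0"
  proof -
    have "((A$1$1 - l)*(A$2$2 - l) - (A$1$2)^2) * x$2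
       = (A$1$1 - l)*(A$1$2*x$1 + (A$2$2 - l)*x$2) - A$1$2*((A$1$1 - l)*x$1 + A$1$2*x$2)"
      by (simp add: power2_eq_square algebra_simps)
    then show ?thesis using e1 e2 by simp
  qed
  have "x$1 \<noteq> 0 \<or> x$2 \<noteq> 0" using nz by (auto simp: vec_eq_iff forall_2)
  then show "(A$1$1 - l)*(A$2$2 - l) = (A$1$2)^2" using f1 f2 by auto
next
  assume ch: "(A$1$1 - l)*(A$2$2 - l) = (A$1$2)^2"
  show "l \<in> eigvals2 A"
  proof (cases "A$1$2 = 0")
    case False
    define x :: "real^2" where "x = vector[A$1$2, l - A$1$1]"
    have nz: "x \<noteq> 0" using False by (auto simp: x_def vec_eq_iff forall_2)
    have "A *v x = l *\<^sub>R x"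
    proof -
      have "(A *v x)$1 = (l *\<^sub>R x)$1" by (simp add: x_def mv_ent algebra_simps)
      moreover have "(A *v x)$2 = (l *\<^sub>R x)$2" using ch sy
        by (simp add: x_def mv_ent power2_eq_square algebra_simps)
      ultimately show ?thesis by (auto simp: vec_eq_iff forall_2)
    qed
    then show ?thesis using nz by (auto simp: eigvals2_def)
  next
    case True
    then have "l = A$1$1 \<or> l = A$2$2" using ch by auto
    then show ?thesis
    proof
      assume l: "l = A$1$1"
      define x :: "real^2" where "x = vector[1, 0]"
      have "A *v x = l *\<^sub>R x" using True sy l by (auto simp: vec_eq_iff forall_2 x_def mv_ent)
      moreover have "x \<noteq> 0" by (auto simp: x_def vec_eq_iff forall_2)
      ultimately show ?thesis by (auto simp: eigvals2_def)
    next
      assume l: "l = A$2$2"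
      define x :: "real^2" where "x = vector[0, 1]"
      have "A *v x = l *\<^sub>R x" using True sy l by (auto simp: vec_eq_iff forall_2 x_def mv_ent)
      moreover have "x \<noteq> 0" by (auto simp: x_def vec_eq_iff forall_2)
      ultimately show ?thesis by (auto simp: eigvals2_def)
    qed
  qed
qed

lemma eigvals2_eq:
  assumes sy: "A$1$2 = A$2$1"
  shows "eigvals2 A = {(A$1$1+A$2$2 - sq2 A)/2, (A$1$1+A$2$2 + sq2 A)/2}"
proof (rule set_eqI)
  fix l
  have "l \<in> eigvals2 A \<longleftrightarrow> (A$1$1 - l)*(A$2$2 - l) - (A$1$2)^2 = 0"
    using eig_char[OF sy] by simp
  also have "\<dots> \<longleftrightarrow> (l - (A$1$1+A$2$2 - sq2 A)/2) * (l - (A$1$1+A$2$2 + sq2 A)/2) = 0"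
    by (simp only: char_factor)
  also have "\<dots> \<longleftrightarrow> l \<in> {(A$1$1+A$2$2 - sq2 A)/2, (A$1$1+A$2$2 + sq2 A)/2}"
    by simp
  finally show "l \<in> eigvals2 A \<longleftrightarrow> l \<in> {(A$1$1+A$2$2 - sq2 A)/2, (A$1$1+A$2$2 + sq2 A)/2}" .
qed

lemma lam1_eq: "A$1$2 = A$2$1 \<Longrightarrow> lam1 A = (A$1$1+A$2$2 + sq2 A)/2"
  using sq2_nonneg[of A] by (simp add: lam1_def eigvals2_eq max_def)
lemma lam2_eq: "A$1$2 = A$2$1 \<Longrightarrow> lam2 A = (A$1$1+A$2$2 - sq2 A)/2"
  using sq2_nonneg[of A] by (simp add: lam2_def eigvals2_eq min_def)

lemma scal_ent: "((\<mu>::real) *\<^sub>R mat 1 :: real^2^2)$i$j = (if i = j then \<mu> else 0)"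
  by (simp add: mat_ent)

lemma one_ne_two2: "(1::2) \<noteq> 2" by simp
lemma mat1_ent [simp]: "(mat k :: real^2^2)$1$1 = k" "(mat k :: real^2^2)$1$2 = 0"
   "(mat k :: real^2^2)$2$1 = 0" "(mat k :: real^2^2)$2$2 = k"
  by (simp_all add: mat_def)

lemma psd_low_iff:
  assumes sy: "A$1$2 = A$2$1"
  shows "psd2 (A - \<mu> *\<^sub>R mat 1) \<longleftrightarrow> \<mu> \<le> lam2 A"
proof -
  have "psd2 (A - \<mu> *\<^sub>R mat 1) \<longleftrightarrow> 0 \<le> A$1$1 - \<mu> \<and> 0 \<le> A$2$2 - \<mu> \<and> (A$1$2)^2 \<le> (A$1$1 - \<mu>)*(A$2$2 - \<mu>)"
    using sy by (simp add: psd2_iff scal_ent)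
  also have "\<dots> \<longleftrightarrow> \<mu> \<le> lam2 A"
  proof -
    let ?m = "(A$1$1+A$2$2 - sq2 A)/2" and ?p = "(A$1$1+A$2$2 + sq2 A)/2"
    have fac: "(A$1$1 - \<mu>)*(A$2$2 - \<mu>) - (A$1$2)^2 = (\<mu> - ?m)*(\<mu> - ?p)" by (rule char_factor)
    have g1: "\<bar>A$1$1 - A$2$2\<bar> \<le> sq2 A" by (rule sq2_ge)
    have s0: "0 \<le> sq2 A" by (rule sq2_nonneg)
    have l2: "lam2 A = ?m" by (rule lam2_eq[OF sy])
    show ?thesis
    proof
      assume h: "0 \<le> A$1$1 - \<mu> \<and> 0 \<le> A$2$2 - \<mu> \<and> (A$1$2)^2 \<le> (A$1$1 - \<mu>)*(A$2$2 - \<mu>)"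
      then have pr: "0 \<le> (\<mu> - ?m)*(\<mu> - ?p)" using fac by linarith
      show "\<mu> \<le> lam2 A"
      proof (rule ccontr)
        assume "\<not> \<mu> \<le> lam2 A"
        then have "\<mu> - ?m > 0" using l2 by linarith
        then have "\<mu> - ?p \<ge> 0" using pr by (simp add: zero_le_mult_iff)
        then show False using h s0 \<open>\<mu> - ?m > 0\<close> by (elim conjE) argo
      qed
    next
      assume h: "\<mu> \<le> lam2 A"
      then have m: "\<mu> \<le> ?m" using l2 by simp
      have "0 \<le> (\<mu> - ?m)*(\<mu> - ?p)" using m s0 by (intro mult_nonpos_nonpos) auto
      moreover have "A$1$1 - A$2$2 \<le> sq2 A" "A$2$2 - A$1$1 \<le> sq2 A" using g1 by linarith+
      ultimately show "0 \<le> A$1$1 - \<mu> \<and> 0 \<le> A$2$2 - \<mu> \<and> (A$1$2)^2 \<le> (A$1$1 - \<mu>)*(A$2$2 - \<mu>)"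
        using fac m by argo
    qed
  qed
  finally show ?thesis .
qed

lemma psd_up_iff:
  assumes sy: "A$1$2 = A$2$1"
  shows "psd2 (\<mu> *\<^sub>R mat 1 - A) \<longleftrightarrow> lam1 A \<le> \<mu>"
proof -
  have "psd2 (\<mu> *\<^sub>R mat 1 - A) \<longleftrightarrow> 0 \<le> \<mu> - A$1$1 \<and> 0 \<le> \<mu> - A$2$2 \<and> (A$1$2)^2 \<le> (\<mu> - A$1$1)*(\<mu> - A$2$2)"
    using sy by (simp add: psd2_iff scal_ent)
  also have "\<dots> \<longleftrightarrow> lam1 A \<le> \<mu>"
  proof -
    let ?m = "(A$1$1+A$2$2 - sq2 A)/2" and ?p = "(A$1$1+A$2$2 + sq2 A)/2"
    have fac0: "(A$1$1 - \<mu>)*(A$2$2 - \<mu>) - (A$1$2)^2 = (\<mu> - ?m)*(\<mu> - ?p)" by (rule char_factor)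
    have "(\<mu> - A$1$1)*(\<mu> - A$2$2) = (A$1$1 - \<mu>)*(A$2$2 - \<mu>)" by (simp add: algebra_simps)
    then have fac: "(\<mu> - A$1$1)*(\<mu> - A$2$2) - (A$1$2)^2 = (\<mu> - ?m)*(\<mu> - ?p)" using fac0 by simp
    have g1: "\<bar>A$1$1 - A$2$2\<bar> \<le> sq2 A" by (rule sq2_ge)
    have s0: "0 \<le> sq2 A" by (rule sq2_nonneg)
    have l1: "lam1 A = ?p" by (rule lam1_eq[OF sy])
    show ?thesis
    proof
      assume h: "0 \<le> \<mu> - A$1$1 \<and> 0 \<le> \<mu> - A$2$2 \<and> (A$1$2)^2 \<le> (\<mu> - A$1$1)*(\<mu> - A$2$2)"
      then have pr: "0 \<le> (\<mu> - ?m)*(\<mu> - ?p)" using fac by linarith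
      show "lam1 A \<le> \<mu>"
      proof (rule ccontr)
        assume "\<not> lam1 A \<le> \<mu>"
        then have "\<mu> - ?p < 0" using l1 by linarith
        then have "\<mu> - ?m \<le> 0" using pr by (simp add: zero_le_mult_iff)
        then show False using h s0 \<open>\<mu> - ?p < 0\<close> by (elim conjE) argo
      qed
    next
      assume h: "lam1 A \<le> \<mu>"
      then have m: "?p \<le> \<mu>" using l1 by simp
      have "0 \<le> (\<mu> - ?m)*(\<mu> - ?p)" using m s0 by (intro mult_nonneg_nonneg) auto
      moreover have "A$1$1 - A$2$2 \<le> sq2 A" "A$2$2 - A$1$1 \<le> sq2 A" using g1 by linarith+
      ultimately show "0 \<le> \<mu> - A$1$1 \<and> 0 \<le> \<mu> - A$2$2 \<and> (A$1$2)^2 \<le> (\<mu> - A$1$1)*(\<mu> - A$2$2)"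
        using fac m by argo
    qed
  qed
  finally show ?thesis .
qed

lemma psd2_sym: "psd2 A \<Longrightarrow> A$1$2 = A$2$1" by (simp add: psd2_iff)
lemma pd2_sym: "pd2 A \<Longrightarrow> A$1$2 = A$2$1" by (simp add: pd2_ent)

lemma psd2_add: assumes "psd2 A" "psd2 B" shows "psd2 (A + B)"
proof -
  have "transpose (A + B) = A + B" using assms by (simp add: sym_iff psd2_sym)
  moreover have "\<forall>x::real^2. 0 \<le> x \<bullet> ((A + B) *v x)"
    using assms by (simp add: psd2_def matrix_vector_mult_add_rdistrib inner_add_right add_nonneg_nonneg)
  ultimately show ?thesis by (simp add: psd2_def)
qed

lemma pd2_add: assumes "pd2 A" "psd2 B" shows "pd2 (A + B)"
proof -
  have "transpose (A + B) = A + B" using assms by (simp add: sym_iff psd2_sym pd2_sym)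
  moreover have "\<forall>x::real^2. x \<noteq> 0 \<longrightarrow> 0 < x \<bullet> ((A + B) *v x)"
    using assms by (simp add: psd2_def pd2_def matrix_vector_mult_add_rdistrib inner_add_right add_pos_nonneg)
  ultimately show ?thesis by (simp add: pd2_def)
qed

lemma psd2_zero: "psd2 0" by (simp add: psd2_iff)

lemma psd2_sum: "finite X \<Longrightarrow> (\<forall>y\<in>X. psd2 (H y)) \<Longrightarrow> psd2 (\<Sum>y\<in>X. H y)"
  by (induction X rule: finite_induct) (auto simp: psd2_zero psd2_add)

lemma psd2_trace: "psd2 A \<Longrightarrow> 0 \<le> trace A" by (simp add: psd2_iff trace2)

lemma pd2_det: assumes "pd2 A" shows "A$1$1*A$2$2 - A$1$2*A$2$1 > 0"
proof -
  have e: "A$1$2 = A$2$1" and f: "A$1$2^2 < A$1$1*A$2$2" using pd2_ent[OF assms] by auto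
  show ?thesis using f unfolding e[symmetric] by (simp add: power2_eq_square)
qed

subsection \<open>Explicit inverse\<close>

definition inv2 :: "mat2 \<Rightarrow> mat2" where
  "inv2 A = (let D = A$1$1*A$2$2 - A$1$2*A$2$1 in
     vector[vector[A$2$2/D, - A$1$2/D], vector[- A$2$1/D, A$1$1/D]])"

lemma inv2_works:
  fixes A :: mat2
  assumes dz: "A$1$1*A$2$2 - A$1$2*A$2$1 \<noteq> 0"
  shows "A ** inv2 A = mat 1" "inv2 A ** A = mat 1"
proof -
  define D where "D = A$1$1*A$2$2 - A$1$2*A$2$1"
  have D0: "D \<noteq> 0" using dz by (simp add: D_def)
  have iv: "inv2 A = vector[vector[A$2$2/D, - A$1$2/D], vector[- A$2$1/D, A$1$1/D]]"
    by (simp add: inv2_def D_def Let_def)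
  have e1: "A$1$1*(A$2$2/D) + A$1$2*(- A$2$1/D) = 1"
  proof -
    have "A$1$1*(A$2$2/D) + A$1$2*(- A$2$1/D) = (A$1$1*A$2$2 - A$1$2*A$2$1)/D" using D0 by (simp add: field_simps)
    also have "\<dots> = 1" using D0 by (simp add: D_def)
    finally show ?thesis .
  qed
  have e2: "A$1$1*(- A$1$2/D) + A$1$2*(A$1$1/D) = 0" using D0 by (simp add: field_simps)
  have e3: "A$2$1*(A$2$2/D) + A$2$2*(- A$2$1/D) = 0" using D0 by (simp add: field_simps)
  have e4: "A$2$1*(- A$1$2/D) + A$2$2*(A$1$1/D) = 1"
  proof -
    have "A$2$1*(- A$1$2/D) + A$2$2*(A$1$1/D) = (A$1$1*A$2$2 - A$1$2*A$2$1)/D" using D0 by (simp add: field_simps)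
    also have "\<dots> = 1" using D0 by (simp add: D_def)
    finally show ?thesis .
  qed
  show "A ** inv2 A = mat 1" using e1 e2 e3 e4 by (simp add: mat2_eq mult_ent iv)
  have f1: "(A$2$2/D)*A$1$1 + (- A$1$2/D)*A$2$1 = 1"
  proof -
    have "(A$2$2/D)*A$1$1 + (- A$1$2/D)*A$2$1 = (A$1$1*A$2$2 - A$1$2*A$2$1)/D" using D0 by (simp add: field_simps)
    also have "\<dots> = 1" using D0 by (simp add: D_def)
    finally show ?thesis .
  qed
  have f2: "(A$2$2/D)*A$1$2 + (- A$1$2/D)*A$2$2 = 0" using D0 by (simp add: field_simps)
  have f3: "(- A$2$1/D)*A$1$1 + (A$1$1/D)*A$2$1 = 0" using D0 by (simp add: field_simps)
  have f4: "(- A$2$1/D)*A$1$2 + (A$1$1/D)*A$2$2 = 1"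
  proof -
    have "(- A$2$1/D)*A$1$2 + (A$1$1/D)*A$2$2 = (A$1$1*A$2$2 - A$1$2*A$2$1)/D" using D0 by (simp add: field_simps)
    also have "\<dots> = 1" using D0 by (simp add: D_def)
    finally show ?thesis .
  qed
  show "inv2 A ** A = mat 1" using f1 f2 f3 f4 by (simp add: mat2_eq mult_ent iv)
qed

lemma inv_unique:
  fixes A B :: mat2
  assumes "A ** B = mat 1"
  shows "matrix_inv A = B \<and> B ** A = mat 1"
proof -
  have "det A * det B = 1" using assms by (metis det_mul det_I)
  then have dz: "A$1$1*A$2$2 - A$1$2*A$2$1 \<noteq> 0" by (auto simp: det_2)
  have ex: "\<exists>K. A ** K = mat 1 \<and> K ** A = mat 1" using inv2_works[OF dz] by blast
  have K: "A ** matrix_inv A = mat 1 \<and> matrix_inv A ** A = mat 1"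
    unfolding matrix_inv_def by (rule someI_ex[OF ex])
  have "B = (matrix_inv A ** A) ** B" using K by simp
  also have "\<dots> = matrix_inv A" using assms by (simp add: matrix_mul_assoc[symmetric])
  finally show ?thesis using K by simp
qed

lemma inv_eq:
  fixes A :: mat2
  assumes dz: "A$1$1*A$2$2 - A$1$2*A$2$1 \<noteq> 0"
  shows "matrix_inv A = inv2 A" "A ** matrix_inv A = mat 1" "matrix_inv A ** A = mat 1"
  using inv_unique[OF inv2_works(1)[OF dz]] inv2_works[OF dz] by auto

lemma inv_ent:
  fixes A :: mat2
  assumes "A$1$2 = A$2$1" "A$1$1*A$2$2 - A$1$2*A$2$1 \<noteq> 0"
  shows "matrix_inv A $1$1 = A$2$2/(A$1$1*A$2$2 - A$1$2^2)"
    "matrix_inv A $1$2 = - A$1$2/(A$1$1*A$2$2 - A$1$2^2)"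
    "matrix_inv A $2$1 = - A$1$2/(A$1$1*A$2$2 - A$1$2^2)"
    "matrix_inv A $2$2 = A$1$1/(A$1$1*A$2$2 - A$1$2^2)"
  using assms by (simp_all add: inv_eq(1) inv2_def Let_def power2_eq_square)


subsection \<open>Inverse and Loewner order\<close>

lemma inv_up_scalar:
  fixes a b d \<mu> D :: real
  assumes mu: "\<mu> > 0" and DD: "D = a*d - b^2" "D > 0"
    and h1: "0 \<le> a - \<mu>" and h2: "0 \<le> d - \<mu>" and h3: "b^2 \<le> (a - \<mu>)*(d - \<mu>)"
  shows "0 \<le> 1/\<mu> - d/D \<and> 0 \<le> 1/\<mu> - a/D \<and> (b/D)^2 \<le> (1/\<mu> - d/D)*(1/\<mu> - a/D)"
proof -
  have x1: "1/\<mu> - d/D = (D - \<mu>*d)/(\<mu>*D)" using mu DD by (simp add: field_simps)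
  have x2: "1/\<mu> - a/D = (D - \<mu>*a)/(\<mu>*D)" using mu DD by (simp add: field_simps)
  have y1: "D - \<mu>*d = ((a - \<mu>)*(d - \<mu>) - b^2) + (a - \<mu>)*\<mu>" using DD by (simp add: algebra_simps)
  have y2: "D - \<mu>*a = ((a - \<mu>)*(d - \<mu>) - b^2) + (d - \<mu>)*\<mu>" using DD by (simp add: algebra_simps)
  have "0 \<le> (a - \<mu>)*\<mu>" "0 \<le> (d - \<mu>)*\<mu>" using h1 h2 mu by simp_all
  moreover have "0 \<le> (a - \<mu>)*(d - \<mu>) - b^2" using h3 by simp
  ultimately have z1: "0 \<le> D - \<mu>*d" "0 \<le> D - \<mu>*a" unfolding y1 y2 by simp_all
  have w0: "(1/\<mu> - d/D)*(1/\<mu> - a/D) - (b/D)^2 = ((D - \<mu>*d)*(D - \<mu>*a) - \<mu>^2*b^2)/(\<mu>^2*D^2)"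
    using mu DD by (simp add: field_simps power2_eq_square)
  have w1: "(D - \<mu>*d)*(D - \<mu>*a) - \<mu>^2*b^2 = D*((a - \<mu>)*(d - \<mu>) - b^2)"
    unfolding DD(1) by (simp add: algebra_simps power2_eq_square)
  have w: "(1/\<mu> - d/D)*(1/\<mu> - a/D) - (b/D)^2 = ((a - \<mu>)*(d - \<mu>) - b^2)/(\<mu>^2*D)"
    unfolding w0 w1 using DD mu by (simp add: power2_eq_square)
  have "0 \<le> ((a - \<mu>)*(d - \<mu>) - b^2)/(\<mu>^2*D)" using h3 mu DD by simp
  then show ?thesis using x1 x2 z1 w mu DD by simp
qed

lemma inv_low_scalar:
  fixes a b d \<mu> D :: real
  assumes DD: "D = a*d - b^2" "D > 0" and ad: "0 < a" "0 < d"
    and h1: "0 \<le> \<mu> - a" and h2: "0 \<le> \<mu> - d" and h3: "b^2 \<le> (\<mu> - a)*(\<mu> - d)"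
  shows "0 \<le> d/D - 1/\<mu> \<and> 0 \<le> a/D - 1/\<mu> \<and> (b/D)^2 \<le> (d/D - 1/\<mu>)*(a/D - 1/\<mu>)"
proof -
  have mu: "\<mu> > 0" using ad h1 by linarith
  have x1: "d/D - 1/\<mu> = (\<mu>*d - D)/(\<mu>*D)" using mu DD by (simp add: field_simps)
  have x2: "a/D - 1/\<mu> = (\<mu>*a - D)/(\<mu>*D)" using mu DD by (simp add: field_simps)
  have y1: "\<mu>*d - D = (\<mu> - a)*d + b^2" using DD by (simp add: algebra_simps)
  have y2: "\<mu>*a - D = (\<mu> - d)*a + b^2" using DD by (simp add: algebra_simps)
  have "0 \<le> (\<mu> - a)*d" "0 \<le> (\<mu> - d)*a" using h1 h2 ad by simp_all
  then have z1: "0 \<le> \<mu>*d - D" "0 \<le> \<mu>*a - D" using y1 y2 by (simp_all add: add_nonneg_nonneg)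
  have w0: "(d/D - 1/\<mu>)*(a/D - 1/\<mu>) - (b/D)^2 = ((\<mu>*d - D)*(\<mu>*a - D) - \<mu>^2*b^2)/(\<mu>^2*D^2)"
    using mu DD by (simp add: field_simps power2_eq_square)
  have w1: "(\<mu>*d - D)*(\<mu>*a - D) - \<mu>^2*b^2 = D*((\<mu> - a)*(\<mu> - d) - b^2)"
    unfolding DD(1) by (simp add: algebra_simps power2_eq_square)
  have w: "(d/D - 1/\<mu>)*(a/D - 1/\<mu>) - (b/D)^2 = ((\<mu> - a)*(\<mu> - d) - b^2)/(\<mu>^2*D)"
    unfolding w0 w1 using DD mu by (simp add: power2_eq_square)
  have "0 \<le> ((\<mu> - a)*(\<mu> - d) - b^2)/(\<mu>^2*D)" using h3 mu DD by simp
  then show ?thesis using x1 x2 z1 w mu DD by simp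
qed


lemma inv_up:
  assumes X: "pd2 X" and h: "psd2 (X - \<mu> *\<^sub>R mat 1)" and mu: "\<mu> > 0"
  shows "psd2 ((1/\<mu>) *\<^sub>R mat 1 - matrix_inv X)"
proof -
  have sy: "X$1$2 = X$2$1" using X by (rule pd2_sym)
  have dz: "X$1$1*X$2$2 - X$1$2*X$2$1 \<noteq> 0" using pd2_det[OF X] by simp
  define D where "D = X$1$1*X$2$2 - X$1$2^2"
  have DD: "D = X$1$1*X$2$2 - X$1$2^2" "D > 0" using pd2_det[OF X] sy by (simp_all add: D_def power2_eq_square)
  have hh: "0 \<le> X$1$1 - \<mu>" "0 \<le> X$2$2 - \<mu>" "(X$1$2)^2 \<le> (X$1$1 - \<mu>)*(X$2$2 - \<mu>)"
    using h sy by (simp_all add: psd2_iff)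
  have c: "0 \<le> 1/\<mu> - X$2$2/D \<and> 0 \<le> 1/\<mu> - X$1$1/D \<and> (X$1$2/D)^2 \<le> (1/\<mu> - X$2$2/D)*(1/\<mu> - X$1$1/D)"
    by (rule inv_up_scalar[OF mu DD hh])
  show ?thesis using c by (simp add: psd2_iff inv_ent[OF sy dz] D_def[symmetric])
qed

lemma inv_low:
  assumes X: "pd2 X" and h: "psd2 (\<mu> *\<^sub>R mat 1 - X)"
  shows "psd2 (matrix_inv X - (1/\<mu>) *\<^sub>R mat 1)"
proof -
  have sy: "X$1$2 = X$2$1" using X by (rule pd2_sym)
  have dz: "X$1$1*X$2$2 - X$1$2*X$2$1 \<noteq> 0" using pd2_det[OF X] by simp
  define D where "D = X$1$1*X$2$2 - X$1$2^2"
  have DD: "D = X$1$1*X$2$2 - X$1$2^2" "D > 0" using pd2_det[OF X] sy by (simp_all add: D_def power2_eq_square)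
  have ad: "0 < X$1$1" "0 < X$2$2" using pd2_ent[OF X] by simp_all
  have hh: "0 \<le> \<mu> - X$1$1" "0 \<le> \<mu> - X$2$2" "(X$1$2)^2 \<le> (\<mu> - X$1$1)*(\<mu> - X$2$2)"
    using h sy by (simp_all add: psd2_iff)
  have c: "0 \<le> X$2$2/D - 1/\<mu> \<and> 0 \<le> X$1$1/D - 1/\<mu> \<and> (X$1$2/D)^2 \<le> (X$2$2/D - 1/\<mu>)*(X$1$1/D - 1/\<mu>)"
    by (rule inv_low_scalar[OF DD ad hh])
  show ?thesis using c by (simp add: psd2_iff inv_ent[OF sy dz] D_def[symmetric])
qed

subsection \<open>Trace inequalities\<close>

lemma trace_scalar:
  fixes x y w :: real
  assumes x: "0 \<le> x" and y: "0 \<le> y" and w: "w^2 \<le> x*y"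
  shows "0 \<le> x + y + 2*w"
proof (cases "w \<ge> 0")
  case True
  have "0 \<le> x + y" using x y by simp
  then show ?thesis using True by simp
next
  case False
  have a1: "(-2*w)^2 = 4*w^2" by (simp add: power2_eq_square)
  have a2: "4*w^2 \<le> 4*(x*y)" using w by simp
  have a3: "(x+y)^2 = 4*(x*y) + (x-y)^2" by (simp add: power2_eq_square algebra_simps)
  have a4: "0 \<le> (x-y)^2" by simp
  have a5: "4*(x*y) \<le> 4*(x*y) + (x-y)^2" using a4 by simp
  have "(-2*w)^2 \<le> (x+y)^2" unfolding a1 a3 using a2 a5 by (rule order_trans)
  moreover have "0 \<le> x + y" using x y by simp
  ultimately have "-2*w \<le> x + y" by (rule power2_le_imp_le)
  then show ?thesis by simp
qed

lemma trace_nonneg: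
  assumes S: "psd2 S" and T: "psd2 T"
  shows "0 \<le> trace (S ** T)"
proof -
  have s: "S$1$2 = S$2$1" "0 \<le> S$1$1" "0 \<le> S$2$2" "(S$1$2)^2 \<le> S$1$1*S$2$2" using S by (auto simp add: psd2_iff)
  have t: "T$1$2 = T$2$1" "0 \<le> T$1$1" "0 \<le> T$2$2" "(T$1$2)^2 \<le> T$1$1*T$2$2" using T by (auto simp add: psd2_iff)
  have "(S$1$2*T$1$2)^2 = (S$1$2)^2*(T$1$2)^2" by (simp add: power_mult_distrib)
  also have "\<dots> \<le> (S$1$1*S$2$2)*(T$1$1*T$2$2)" using s t by (intro mult_mono) simp_all
  also have "\<dots> = (S$1$1*T$1$1)*(S$2$2*T$2$2)" by simp
  finally have "0 \<le> S$1$1*T$1$1 + S$2$2*T$2$2 + 2*(S$1$2*T$1$2)"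
    using s t by (intro trace_scalar) simp_all
  then show ?thesis using s t by (simp add: trace2 mult_ent algebra_simps)
qed

lemma trace_low:
  assumes S: "psd2 S" and h: "psd2 (X - \<mu> *\<^sub>R mat 1)"
  shows "\<mu> * trace S \<le> trace (S ** X)"
proof -
  have "0 \<le> trace (S ** (X - \<mu> *\<^sub>R mat 1))" by (rule trace_nonneg[OF S h])
  moreover have "trace (S ** (X - \<mu> *\<^sub>R mat 1)) = trace (S ** X) - \<mu> * trace S"
    by (simp add: trace2 mult_ent algebra_simps)
  ultimately show ?thesis by simp
qed

lemma trace_up:
  assumes S: "psd2 S" and h: "psd2 (\<mu> *\<^sub>R mat 1 - X)"
  shows "trace (S ** X) \<le> \<mu> * trace S"
proof -
  have "0 \<le> trace (S ** (\<mu> *\<^sub>R mat 1 - X))" by (rule trace_nonneg[OF S h])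
  moreover have "trace (S ** (\<mu> *\<^sub>R mat 1 - X)) = \<mu> * trace S - trace (S ** X)"
    by (simp add: trace2 mult_ent algebra_simps)
  ultimately show ?thesis by simp
qed

lemma lam2_pos: assumes X: "pd2 X" shows "0 < lam2 X"
proof -
  have e: "X$1$2 = X$2$1" "0 < X$1$1" "0 < X$2$2" "X$1$2^2 < X$1$1*X$2$2" using pd2_ent[OF X] by auto
  have "(X$1$1 - X$2$2)^2 + 4*(X$1$2)^2 < (X$1$1 + X$2$2)^2"
  proof -
    have "(X$1$1 + X$2$2)^2 - ((X$1$1 - X$2$2)^2 + 4*(X$1$2)^2) = 4*(X$1$1*X$2$2 - X$1$2^2)"
      by (simp add: power2_eq_square algebra_simps)
    then show ?thesis using e by argo
  qed
  then have "sq2 X < sqrt ((X$1$1 + X$2$2)^2)" unfolding sq2_def by (rule real_sqrt_less_mono)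
  then have "sq2 X < X$1$1 + X$2$2" using e by simp
  then show ?thesis using lam2_eq[OF e(1)] by simp
qed

lemma lam2_le_lam1: assumes "X$1$2 = X$2$1" shows "lam2 X \<le> lam1 X"
proof -
  have "lam2 X = (X$1$1+X$2$2 - sq2 X)/2" "lam1 X = (X$1$1+X$2$2 + sq2 X)/2" "0 \<le> sq2 X"
    using lam1_eq[OF assms] lam2_eq[OF assms] sq2_nonneg by auto
  then show ?thesis by argo
qed


subsection \<open>Square root\<close>

lemma sqrt_scalar:
  fixes a b d :: real
  assumes a: "0 < a" and d: "0 < d" and det: "b^2 < a*d"
  shows "\<exists>p q r. p*p + q*q = a \<and> p*q + q*r = b \<and> q*q + r*r = d \<and> p*r - q*q \<noteq> 0"
proof -
  define \<sigma> where "\<sigma> = sqrt (a*d - b^2)"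
  have sp: "0 < \<sigma>" using det by (simp add: \<sigma>_def)
  have ss: "\<sigma>^2 = a*d - b^2" using det by (simp add: \<sigma>_def)
  define c where "c = sqrt (a + d + 2*\<sigma>)"
  have cp: "0 < c" using a d sp by (simp add: c_def)
  have cc: "c^2 = a + d + 2*\<sigma>" using a d sp by (simp add: c_def)
  define p where "p = (a+\<sigma>)/c"
  define q where "q = b/c"
  define r where "r = (d+\<sigma>)/c"
  have "p*p + q*q = ((a+\<sigma>)^2 + b^2)/c^2" using cp by (simp add: p_def q_def field_simps power2_eq_square)
  also have "(a+\<sigma>)^2 + b^2 = a^2 + 2*a*\<sigma> + \<sigma>^2 + b^2" by (simp add: power2_eq_square algebra_simps)
  also have "\<dots> = a*c^2" unfolding ss cc by (simp add: power2_eq_square algebra_simps)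
  finally have e1: "p*p + q*q = a" using cp by simp
  have "p*q + q*r = (b*(a + d + 2*\<sigma>))/c^2" using cp by (simp add: p_def q_def r_def field_simps power2_eq_square)
  also have "\<dots> = b" unfolding cc[symmetric] using cp by simp
  finally have e2: "p*q + q*r = b" .
  have "q*q + r*r = ((d+\<sigma>)^2 + b^2)/c^2" using cp by (simp add: r_def q_def field_simps power2_eq_square)
  also have "(d+\<sigma>)^2 + b^2 = d^2 + 2*d*\<sigma> + \<sigma>^2 + b^2" by (simp add: power2_eq_square algebra_simps)
  also have "\<dots> = d*c^2" unfolding ss cc by (simp add: power2_eq_square algebra_simps)
  finally have e3: "q*q + r*r = d" using cp by simp
  have "p*r - q*q = ((a+\<sigma>)*(d+\<sigma>) - b^2)/c^2" using cp by (simp add: p_def q_def r_def field_simps power2_eq_square)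
  also have "(a+\<sigma>)*(d+\<sigma>) - b^2 = (a*d - b^2) + \<sigma>*(a+d) + \<sigma>^2" by (simp add: power2_eq_square algebra_simps)
  also have "\<dots> = \<sigma>*c^2" unfolding cc ss[symmetric] by (simp add: power2_eq_square algebra_simps)
  finally have e4: "p*r - q*q = \<sigma>" using cp by simp
  show ?thesis using e1 e2 e3 e4 sp by (intro exI[of _ p] exI[of _ q] exI[of _ r]) simp
qed

lemma pd_sqrt:
  assumes P: "pd2 P"
  shows "\<exists>R. transpose R = R \<and> R ** R = P \<and> R$1$1*R$2$2 - R$1$2*R$2$1 \<noteq> 0"
proof -
  have e: "P$1$2 = P$2$1" "0 < P$1$1" "0 < P$2$2" "P$1$2^2 < P$1$1*P$2$2" using pd2_ent[OF P] by auto
  obtain p q r where pqr: "p*p + q*q = P$1$1" "p*q + q*r = P$1$2" "q*q + r*r = P$2$2" "p*r - q*q \<noteq> 0"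
    using sqrt_scalar[OF e(2,3,4)] by blast
  define R :: mat2 where "R = vector[vector[p,q],vector[q,r]]"
  have "transpose R = R" by (simp add: R_def sym_iff)
  moreover have "R ** R = P" using pqr e(1) by (simp add: R_def mat2_eq mult_ent algebra_simps)
  moreover have "R$1$1*R$2$2 - R$1$2*R$2$1 \<noteq> 0" using pqr by (simp add: R_def)
  ultimately show ?thesis by blast
qed


lemma add_rdist2: "((A::mat2) + B) ** C = A ** C + B ** C"
  by (simp add: vec_eq_iff matrix_matrix_mult_def sum.distrib distrib_right)

lemma trace_I2: "trace (mat 1 :: mat2) = 2" by (simp add: trace2)

lemma pd2_I: "pd2 (mat 1)"
  by (simp add: pd2_def inner2 mv_ent sym_iff) (metis inner2 inner_gt_zero_iff power2_eq_square)

lemma key_bounds: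
  assumes P: "pd2 P" and G: "psd2 G"
  shows "trace G / (lam1 P * lam1 (P + G)) \<le> trace (matrix_inv P) - trace (matrix_inv (P + G))"
    and "trace (matrix_inv P) - trace (matrix_inv (P + G)) \<le> trace G / (lam2 P * lam2 (P + G))"
proof -
  define Q where "Q = P + G"
  have Q: "pd2 Q" unfolding Q_def by (rule pd2_add[OF P G])
  obtain R where Rs: "transpose R = R" and RR: "R ** R = P" and Rd: "R$1$1*R$2$2 - R$1$2*R$2$1 \<noteq> 0"
    using pd_sqrt[OF P] by blast
  define Ri where "Ri = matrix_inv R"
  have RRi: "R ** Ri = mat 1" "Ri ** R = mat 1" using inv_eq[OF Rd] by (simp_all add: Ri_def)
  have "R ** transpose Ri = mat 1"
    using arg_cong[OF RRi(2), of transpose] Rs by (simp add: matrix_transpose_mul)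
  then have Ris: "transpose Ri = Ri" using inv_unique Ri_def by metis
  have Pi: "matrix_inv P = Ri ** Ri"
  proof -
    have "P ** (Ri ** Ri) = R ** (R ** Ri) ** Ri" using RR by (simp add: matrix_mul_assoc)
    also have "\<dots> = mat 1" using RRi by simp
    finally show ?thesis using inv_unique by blast
  qed
  define Qi where "Qi = matrix_inv Q"
  have QQi: "Q ** Qi = mat 1" "Qi ** Q = mat 1"
    using inv_eq[of Q] pd2_det[OF Q] by (simp_all add: Qi_def)
  define K where "K = Ri ** G ** Ri"
  have Kpsd: "psd2 K"
  proof -
    have "transpose K = K" using Ris G by (simp add: K_def matrix_transpose_mul psd2_def matrix_mul_assoc)
    moreover have "0 \<le> x \<bullet> (K *v x)" for x :: "real^2"
    proof -
      have "x \<bullet> (K *v x) = (Ri *v x) \<bullet> (G *v (Ri *v x))"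
        by (metis K_def Ris dot_lmul_matrix matrix_vector_mul_assoc transpose_matrix_vector)
      also have "\<dots> \<ge> 0" using G by (simp add: psd2_def)
      finally show ?thesis .
    qed
    ultimately show ?thesis by (simp add: psd2_def)
  qed
  define T where "T = mat 1 + K"
  have TQ: "T = Ri ** Q ** Ri"
  proof -
    have "Ri ** P ** Ri = mat 1"
      using RR RRi by (metis matrix_mul_assoc matrix_mul_rid)
    then show ?thesis
      by (simp add: T_def K_def Q_def matrix_add_ldistrib add_rdist2)
  qed
  have Tinv: "matrix_inv T = R ** Qi ** R"
  proof -
    have "T ** (R ** Qi ** R) = Ri ** Q ** (Ri ** R) ** Qi ** R" by (simp add: TQ matrix_mul_assoc)
    also have "\<dots> = Ri ** (Q ** Qi) ** R" using RRi by (simp add: matrix_mul_assoc)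
    also have "\<dots> = mat 1" using RRi QQi by simp
    finally show ?thesis using inv_unique by blast
  qed
  have Tpd: "pd2 T" unfolding T_def by (rule pd2_add[OF pd2_I Kpsd])
  have "psd2 (T - 1 *\<^sub>R mat 1)" using Kpsd by (simp add: T_def)
  then have "psd2 ((1/1) *\<^sub>R mat 1 - matrix_inv T)" by (rule inv_up[OF Tpd]) simp
  then have Spsd: "psd2 (mat 1 - R ** Qi ** R)" by (simp add: Tinv)
  define S where "S = mat 1 - R ** Qi ** R"
  have D_eq: "trace (S ** matrix_inv P) = trace (matrix_inv P) - trace Qi"
  proof -
    have "S ** matrix_inv P = matrix_inv P - R ** (Qi ** Ri)"
    proof -
      have "(R ** Qi ** R) ** (Ri ** Ri) = R ** (Qi ** Ri)" using RRi by (metis matrix_mul_assoc matrix_mul_lid)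
      then show ?thesis by (simp add: S_def Pi mat2_eq mult_ent algebra_simps)
    qed
    moreover have "trace (R ** (Qi ** Ri)) = trace Qi"
      using RRi by (simp add: trace_mul_sym[of R] matrix_mul_assoc[symmetric])
    ultimately show ?thesis by (simp add: trace_sub)
  qed
  have S_eq: "trace S = trace (G ** Qi)"
  proof -
    have "trace S = 2 - trace (R ** (Qi ** R))" by (simp add: S_def trace_sub trace_I2 matrix_mul_assoc)
    also have "trace (R ** (Qi ** R)) = trace (Qi ** P)"
      using RR by (simp add: trace_mul_sym[of R] matrix_mul_assoc[symmetric])
    also have "trace (G ** Qi) = 2 - trace (P ** Qi)"
    proof -
      have "Q ** Qi = P ** Qi + G ** Qi" by (simp add: Q_def add_rdist2)
      then have "trace (mat 1 :: mat2) = trace (P ** Qi) + trace (G ** Qi)" using QQi by (simp add: trace_add)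
      then show ?thesis by (simp add: trace_I2)
    qed
    ultimately show ?thesis by (simp add: trace_mul_sym[of Qi])
  qed
  have Psy: "P$1$2 = P$2$1" using P by (rule pd2_sym)
  have Qsy: "Q$1$2 = Q$2$1" using Q by (rule pd2_sym)
  have l2P: "0 < lam2 P" using lam2_pos[OF P] .
  have l2Q: "0 < lam2 Q" using lam2_pos[OF Q] .
  have l1P: "0 < lam1 P" using l2P lam2_le_lam1[OF Psy] by simp
  have l1Q: "0 < lam1 Q" using l2Q lam2_le_lam1[OF Qsy] by simp
  have Pi_low: "psd2 (matrix_inv P - (1/lam1 P) *\<^sub>R mat 1)"
    by (rule inv_low[OF P]) (simp add: psd_up_iff[OF Psy])
  have Pi_up: "psd2 ((1/lam2 P) *\<^sub>R mat 1 - matrix_inv P)"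
    by (rule inv_up[OF P _ l2P]) (simp add: psd_low_iff[OF Psy])
  have Qi_low: "psd2 (Qi - (1/lam1 Q) *\<^sub>R mat 1)" unfolding Qi_def
    by (rule inv_low[OF Q]) (simp add: psd_up_iff[OF Qsy])
  have Qi_up: "psd2 ((1/lam2 Q) *\<^sub>R mat 1 - Qi)" unfolding Qi_def
    by (rule inv_up[OF Q _ l2Q]) (simp add: psd_low_iff[OF Qsy])
  have Sp: "psd2 S" using Spsd by (simp add: S_def)
  have a1: "(1/lam1 P) * trace S \<le> trace (matrix_inv P) - trace Qi"
    using trace_low[OF Sp Pi_low] D_eq by simp
  have a2: "trace (matrix_inv P) - trace Qi \<le> (1/lam2 P) * trace S"
    using trace_up[OF Sp Pi_up] D_eq by simp
  have b1: "(1/lam1 Q) * trace G \<le> trace S"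
    using trace_low[OF G Qi_low] S_eq by simp
  have b2: "trace S \<le> (1/lam2 Q) * trace G"
    using trace_up[OF G Qi_up] S_eq by simp
  have "trace G / (lam1 P * lam1 Q) = (1/lam1 P) * ((1/lam1 Q) * trace G)" by simp
  also have "\<dots> \<le> (1/lam1 P) * trace S" using b1 l1P by (intro mult_left_mono) simp_all
  also have "\<dots> \<le> trace (matrix_inv P) - trace Qi" by (rule a1)
  finally show "trace G / (lam1 P * lam1 (P + G)) \<le> trace (matrix_inv P) - trace (matrix_inv (P + G))"
    by (simp add: Q_def Qi_def)
  have "trace (matrix_inv P) - trace Qi \<le> (1/lam2 P) * trace S" by (rule a2)
  also have "\<dots> \<le> (1/lam2 P) * ((1/lam2 Q) * trace G)" using b2 l2P by (intro mult_left_mono) simp_all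
  also have "\<dots> = trace G / (lam2 P * lam2 Q)" by simp
  finally show "trace (matrix_inv P) - trace (matrix_inv (P + G)) \<le> trace G / (lam2 P * lam2 (P + G))"
    by (simp add: Q_def Qi_def)
qed


lemma foldl_acc_sub:
  "set (foldl (\<lambda>S y. if c y + sum c (set S) \<le> B then S @ [y] else S) S0 ys) \<subseteq> set S0 \<union> set ys"
proof (induction ys arbitrary: S0)
  case Nil then show ?case by simp
next
  case (Cons a ys)
  show ?case using Cons[of "if c a + sum c (set S0) \<le> B then S0 @ [a] else S0"] by auto
qed

lemma greedy_sub: "set (greedy_acc c B ys) \<subseteq> set ys"
  unfolding greedy_acc_def using foldl_acc_sub[of c B "[]" ys] by simp

lemma Hset_insert: "finite X \<Longrightarrow> y \<notin> X \<Longrightarrow> Hset H (insert y X) = H y + Hset H X"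
  by (simp add: Hset_def)

lemma Hset_union: "finite X \<Longrightarrow> finite A \<Longrightarrow> Hset H (A \<union> X) = Hset H X + Hset H (A - X)"
proof -
  assume f: "finite X" "finite A"
  have e: "A \<union> X = X \<union> (A - X)" by blast
  have "sum H (X \<union> (A - X)) = sum H X + sum H (A - X)" using f by (intro sum.union_disjoint) auto
  then show ?thesis unfolding Hset_def e .
qed

lemma trace_Hset: "finite X \<Longrightarrow> trace (Hset H X) = (\<Sum>y\<in>X. trace (H y))"
proof (induction X rule: finite_induct)
  case empty then show ?case by (simp add: Hset_def trace2)
next
  case (insert x F) then show ?case by (simp add: Hset_insert trace_add)
qed

lemma psd2_Hset: "finite X \<Longrightarrow> \<forall>y\<in>X. psd2 (H y) \<Longrightarrow> psd2 (Hset H X)"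
  unfolding Hset_def by (rule psd2_sum)

lemma lam2_mono:
  assumes X: "pd2 X" and G: "psd2 G"
  shows "lam2 X \<le> lam2 (X + G)"
proof -
  have sx: "X$1$2 = X$2$1" using X by (rule pd2_sym)
  have sxg: "(X+G)$1$2 = (X+G)$2$1" using pd2_add[OF X G] by (rule pd2_sym)
  have "psd2 (X - lam2 X *\<^sub>R mat 1)" using psd_low_iff[OF sx] by simp
  then have "psd2 ((X - lam2 X *\<^sub>R mat 1) + G)" using G by (rule psd2_add)
  then have "psd2 ((X + G) - lam2 X *\<^sub>R mat 1)" by (simp add: algebra_simps)
  then show ?thesis using psd_low_iff[OF sxg] by simp
qed

lemma scalar_step:
  fixes t a b c \<rho> :: real
  assumes t: "0 \<le> t" and a: "0 < a" and b: "0 < b" and r: "0 < \<rho>" and bc: "b*\<rho> \<le> c"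
  shows "t*\<rho>/(a*c) \<le> t/(a*b)"
proof -
  have bp: "0 < b*\<rho>" using b r by simp
  have "t*\<rho>/(a*c) \<le> t*\<rho>/(a*(b*\<rho>))"
    using t a bp r bc by (intro divide_left_mono mult_left_mono) simp_all
  also have "\<dots> = t/(a*b)" using r by simp
  finally show ?thesis .
qed


theorem lemma4:
  fixes M :: "'a set" and H :: "'a \<Rightarrow> mat2" and Fp :: mat2
    and c :: "'a \<Rightarrow> real" and B :: real and fh :: "'a set \<Rightarrow> real"
    and ps :: "'a list" and z :: "nat \<Rightarrow> 'a" and gamma1 :: real
  assumes finM: "finite M"
    and Hpsd: "\<forall>y\<in>M. psd2 (H y)"
    and Fpd: "pd2 Fp"
    and cpos: "\<forall>y\<in>M. c y > 0"
    and Bnn: "B \<ge> 0"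
    and fh0: "fh {} = 0"
    and run: "alg2_run fh c B M ps"
    and zmin: "\<forall>j \<le> length (greedy_acc c B ps). M - Y2j c B ps j \<noteq> {} \<longrightarrow>
                 z j \<in> M - Y2j c B ps j \<and>
                 (\<forall>y \<in> M - Y2j c B ps j.
                    lam2 (Fp + Hset H (insert (z j) (Y2j c B ps j))) /
                    lam1 (Fp + Hset H (insert (z j) (Y2j c B ps j)))
                  \<le> lam2 (Fp + Hset H (insert y (Y2j c B ps j))) /
                    lam1 (Fp + Hset H (insert y (Y2j c B ps j))))"
    and g1_ok: "gsr1_ok (fPa Fp H) M (Y2j c B ps) (length (greedy_acc c B ps)) gamma1"
    and g1_max: "\<forall>g. gsr1_ok (fPa Fp H) M (Y2j c B ps) (length (greedy_acc c B ps)) g \<longrightarrow> g \<le> gamma1"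
  shows "gamma1 \<ge> Min ((\<lambda>j.
           (lam2 (Fp + Hset H (Y2j c B ps j)) * lam2 (Fp + Hset H (insert (z j) (Y2j c B ps j)))) /
           (lam1 (Fp + Hset H (Y2j c B ps j)) * lam1 (Fp + Hset H (insert (z j) (Y2j c B ps j)))))
         ` {0..length (greedy_acc c B ps)})"
proof -
  define n where "n = length (greedy_acc c B ps)"
  define tm where "tm = (\<lambda>j.
           (lam2 (Fp + Hset H (Y2j c B ps j)) * lam2 (Fp + Hset H (insert (z j) (Y2j c B ps j)))) /
           (lam1 (Fp + Hset H (Y2j c B ps j)) * lam1 (Fp + Hset H (insert (z j) (Y2j c B ps j)))))"
  define g where "g = Min (tm ` {0..n})"
  have "gsr1_ok (fPa Fp H) M (Y2j c B ps) n g"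
    unfolding gsr1_ok_def
  proof (intro allI impI)
    fix A j assume AM: "A \<subseteq> M" and jn: "j \<le> n"
    let ?Y = "Y2j c B ps j"
    have psM: "set ps = M" using run by (simp add: alg2_run_def)
    have YM: "?Y \<subseteq> M" unfolding Y2j_def using set_take_subset[of j "greedy_acc c B ps"] greedy_sub[of c B ps] psM by blast
    have finY: "finite ?Y" by (simp add: Y2j_def)
    have finA: "finite A" using finM AM finite_subset by blast
    have finAY: "finite (A - ?Y)" using finA by simp
    show "(\<Sum>y\<in>A - ?Y. fPa Fp H (insert y ?Y) - fPa Fp H ?Y) \<ge> g * (fPa Fp H (A \<union> ?Y) - fPa Fp H ?Y)"
    proof (cases "A - ?Y = {}")
      case True
      then have "A \<union> ?Y = ?Y" by blast
      then show ?thesis unfolding True by simp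
    next
      case False
      have MY: "M - ?Y \<noteq> {}" using False AM by blast
      have zz: "z j \<in> M - ?Y \<and> (\<forall>y \<in> M - ?Y.
                    lam2 (Fp + Hset H (insert (z j) ?Y)) / lam1 (Fp + Hset H (insert (z j) ?Y))
                  \<le> lam2 (Fp + Hset H (insert y ?Y)) / lam1 (Fp + Hset H (insert y ?Y)))"
        using zmin jn MY unfolding n_def by blast
      define P where "P = Fp + Hset H ?Y"
      have HY: "psd2 (Hset H ?Y)" using psd2_Hset[OF finY] Hpsd YM by blast
      have Ppd: "pd2 P" unfolding P_def by (rule pd2_add[OF Fpd HY])
      define G where "G = Hset H (A - ?Y)"
      have Gpsd: "psd2 G" unfolding G_def using psd2_Hset[OF finAY] Hpsd AM by blast
      have QG: "Fp + Hset H (A \<union> ?Y) = P + G"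
        using Hset_union[OF finY finA, of H] by (simp add: P_def G_def add.assoc)
      have Py: "\<And>y. y \<notin> ?Y \<Longrightarrow> Fp + Hset H (insert y ?Y) = P + H y"
        using Hset_insert[OF finY] by (simp add: P_def add_ac)
      have fd: "\<And>X. fPa Fp H X - fPa Fp H ?Y = trace (matrix_inv P) - trace (matrix_inv (Fp + Hset H X))"
        by (simp add: fPa_def P_def)
      have zM: "z j \<in> M" and zY: "z j \<notin> ?Y" using zz by auto
      define Pz where "Pz = P + H (z j)"
      have Pzpd: "pd2 Pz" unfolding Pz_def using pd2_add[OF Ppd] Hpsd zM by blast
      define \<rho> where "\<rho> = lam2 Pz / lam1 Pz"
      have Pzsy: "Pz$1$2 = Pz$2$1" using Pzpd by (rule pd2_sym)
      have l2Pz: "0 < lam2 Pz" using lam2_pos[OF Pzpd] .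
      have l1Pz: "0 < lam1 Pz" using l2Pz lam2_le_lam1[OF Pzsy] by simp
      have rpos: "0 < \<rho>" using l2Pz l1Pz by (simp add: \<rho>_def)
      have rho_le: "\<And>y. y \<in> A - ?Y \<Longrightarrow> \<rho> \<le> lam2 (P + H y) / lam1 (P + H y)"
      proof -
        fix y assume y: "y \<in> A - ?Y"
        then have "y \<in> M - ?Y" using AM by blast
        then have "lam2 (Fp + Hset H (insert (z j) ?Y)) / lam1 (Fp + Hset H (insert (z j) ?Y))
                  \<le> lam2 (Fp + Hset H (insert y ?Y)) / lam1 (Fp + Hset H (insert y ?Y))" using zz by blast
        then show "\<rho> \<le> lam2 (P + H y) / lam1 (P + H y)" using Py[OF zY] Py[of y] y
          by (simp add: \<rho>_def Pz_def)
      qed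
      have tmj: "tm j = lam2 P / lam1 P * \<rho>"
        using Py[OF zY] by (simp add: tm_def \<rho>_def Pz_def P_def add.assoc)
      have g_le: "g \<le> tm j" unfolding g_def by (rule Min_le) (use jn in auto)
      define Q where "Q = P + G"
      have Qpd: "pd2 Q" unfolding Q_def by (rule pd2_add[OF Ppd Gpsd])
      have Psy: "P$1$2 = P$2$1" using Ppd by (rule pd2_sym)
      have l2P: "0 < lam2 P" using lam2_pos[OF Ppd] .
      have l1P: "0 < lam1 P" using l2P lam2_le_lam1[OF Psy] by simp
      have Qsy: "Q$1$2 = Q$2$1" using Qpd by (rule pd2_sym)
      have l2Q: "0 < lam2 Q" using lam2_pos[OF Qpd] .
      have l1Q: "0 < lam1 Q" using l2Q lam2_le_lam1[OF Qsy] by simp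
      define D where "D = trace (matrix_inv P) - trace (matrix_inv Q)"
      have kb1: "trace G / (lam1 P * lam1 Q) \<le> D" using key_bounds(1)[OF Ppd Gpsd] by (simp add: D_def Q_def)
      have kb2: "D \<le> trace G / (lam2 P * lam2 Q)" using key_bounds(2)[OF Ppd Gpsd] by (simp add: D_def Q_def)
      have tG: "0 \<le> trace G" using Gpsd by (rule psd2_trace)
      have D0: "0 \<le> D" using kb1 tG l1P l1Q by (smt (verit) divide_nonneg_pos mult_pos_pos)
      have RHS: "fPa Fp H (A \<union> ?Y) - fPa Fp H ?Y = D" using fd QG by (simp add: D_def Q_def)
      have each: "\<And>y. y \<in> A - ?Y \<Longrightarrow> trace (H y) * \<rho> / (lam1 P * lam2 Q) \<le> fPa Fp H (insert y ?Y) - fPa Fp H ?Y"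
      proof -
        fix y assume y: "y \<in> A - ?Y"
        have Hy: "psd2 (H y)" using Hpsd y AM by blast
        define Py' where "Py' = P + H y"
        have Pypd: "pd2 Py'" unfolding Py'_def by (rule pd2_add[OF Ppd Hy])
        have Pysy: "Py'$1$2 = Py'$2$1" using Pypd by (rule pd2_sym)
        have l2Py: "0 < lam2 Py'" using lam2_pos[OF Pypd] .
        have l1Py: "0 < lam1 Py'" using l2Py lam2_le_lam1[OF Pysy] by simp
        have m1: "trace (H y) / (lam1 P * lam1 Py') \<le> fPa Fp H (insert y ?Y) - fPa Fp H ?Y"
          using key_bounds(1)[OF Ppd Hy] fd Py[of y] y by (simp add: Py'_def)
        have Gy: "G = H y + Hset H ((A - ?Y) - {y})"
        proof -
          have "insert y ((A - ?Y) - {y}) = A - ?Y" using y by blast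
          then show ?thesis unfolding G_def using Hset_insert[of "(A - ?Y) - {y}" y H] finAY by simp
        qed
        have R2: "psd2 (Hset H ((A - ?Y) - {y}))" using psd2_Hset[of "(A - ?Y) - {y}" H] finAY Hpsd AM by blast
        have "Q = Py' + Hset H ((A - ?Y) - {y})" by (simp add: Q_def Py'_def Gy add.assoc)
        then have l2mono: "lam2 Py' \<le> lam2 Q" using lam2_mono[OF Pypd R2] by simp
        have "\<rho> \<le> lam2 Py' / lam1 Py'" using rho_le[OF y] by (simp add: Py'_def)
        then have "\<rho> * lam1 Py' \<le> lam2 Py'" using l1Py by (simp add: pos_le_divide_eq)
        then have bc: "lam1 Py' * \<rho> \<le> lam2 Q" using l2mono by (simp add: mult.commute)
        have "trace (H y) * \<rho> / (lam1 P * lam2 Q) \<le> trace (H y) / (lam1 P * lam1 Py')"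
          by (rule scalar_step[OF psd2_trace[OF Hy] l1P l1Py rpos bc])
        then show "trace (H y) * \<rho> / (lam1 P * lam2 Q) \<le> fPa Fp H (insert y ?Y) - fPa Fp H ?Y"
          using m1 by simp
      qed
      have "trace G * \<rho> / (lam1 P * lam2 Q) = (\<Sum>y\<in>A - ?Y. trace (H y) * \<rho> / (lam1 P * lam2 Q))"
        unfolding G_def trace_Hset[OF finAY] by (simp add: sum_divide_distrib sum_distrib_right)
      also have "\<dots> \<le> (\<Sum>y\<in>A - ?Y. fPa Fp H (insert y ?Y) - fPa Fp H ?Y)"
        by (rule sum_mono) (rule each)
      finally have sumge: "trace G * \<rho> / (lam1 P * lam2 Q) \<le> (\<Sum>y\<in>A - ?Y. fPa Fp H (insert y ?Y) - fPa Fp H ?Y)" .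
      have tm0: "0 \<le> tm j" unfolding tmj using l2P l1P rpos by simp
      have "g * D \<le> tm j * D" using g_le D0 by (rule mult_right_mono)
      also have "\<dots> \<le> tm j * (trace G / (lam2 P * lam2 Q))" using kb2 tm0 by (rule mult_left_mono)
      also have "\<dots> = trace G * \<rho> / (lam1 P * lam2 Q)" unfolding tmj using l2P l1P l2Q by (simp add: field_simps)
      finally show ?thesis using sumge RHS by simp
    qed
  qed
  then have "g \<le> gamma1" using g1_max unfolding n_def by blast
  then show ?thesis by (simp only: g_def tm_def n_def)
qed

end
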